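(* Under the standing setting and assumptions (A1)–(A3) described in the context, the following are equivalent: (a) $\mathcal R(X)\neq\emptyset$ for every $X\in\mathcal X$; (b) $\mathcal R(X)\neq\emptyset$ for every $X\in\partial(\mathcal A+\ker(\pi))$; (c) $\mathcal A+\ker(\pi)$ is closed.
   Context: Let $\mathcal X$ be a Hausdorff, first countable, locally convex topological vector space over $\mathbb R$, partially ordered by a partial order $\geq$ with positive cone $\mathcal X_+=\{X\in\mathcal X: X\geq 0\}$. Let $\mathcal M\subset\mathcal X$ be a vector subspace with $1<\dim\mathcal M<\infty$, carrying the relative topology, and let $\pi:\mathcal M\to\mathbb R$ be linear with $\ker(\pi)=\{Z\in\mathcal M:\pi(Z)=0\}$. Standing assumptions: (A1) there is $U\in\mathcal M\cap\mathcal X_+$ with $\pi(U)=1$; (A2) $\mathcal A\subsetneq\mathcal X$ is closed, contains $0$, and satisfies $\mathcal A+\mathcal X_+\subset\mathcal A$; (A3) the map $\rho(X)=\inf\{\pi(Z): Z\in\mathcal M,\ X+Z\in\mathcal A\}$ is finitely valued and continuous on $\mathcal X$. The optimal payoff map is $\mathcal R(X)=\{Z\in\mathcal M: X+Z\in\mathcal A,\ \pi(Z)=\rho(X)\}$. $\partial$ denotes boundary in $\mathcal X$. *)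

theory Defs
  imports "HOL-Analysis.Analysis"
begin

text \<open>Hausdorffness and first countability are imposed via the type classes
  t2_space and first_countable_topology.\<close>
definition tvs_ops_continuous :: "'a::{real_vector,topological_space} itself \<Rightarrow> bool" where
  "tvs_ops_continuous _ \<longleftrightarrow>
     continuous_on (UNIV :: ('a \<times> 'a) set) (\<lambda>p. fst p + snd p) \<and>
     continuous_on (UNIV :: (real \<times> 'a) set) (\<lambda>p. fst p *\<^sub>R snd p)"

definition locally_convex :: "'a::{real_vector,topological_space} itself \<Rightarrow> bool" where
  "locally_convex _ \<longleftrightarrow>
     (\<forall>(x::'a) U. open U \<and> x \<in> U \<longrightarrow> (\<exists>V. open V \<and> convex V \<and> x \<in> V \<and> V \<subseteq> U))"

definition vector_order :: "('a::real_vector \<Rightarrow> 'a \<Rightarrow> bool) \<Rightarrow> bool" where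
  "vector_order ge \<longleftrightarrow>
     (\<forall>x. ge x x) \<and> (\<forall>x y. ge x y \<and> ge y x \<longrightarrow> x = y) \<and>
     (\<forall>x y z. ge x y \<and> ge y z \<longrightarrow> ge x z) \<and>
     (\<forall>x y z. ge x y \<longrightarrow> ge (x + z) (y + z)) \<and>
     (\<forall>x y (c::real). ge x y \<and> c \<ge> 0 \<longrightarrow> ge (c *\<^sub>R x) (c *\<^sub>R y))"

definition pos_cone :: "('a::real_vector \<Rightarrow> 'a \<Rightarrow> bool) \<Rightarrow> 'a set" where
  "pos_cone ge = {X. ge X 0}"

definition linear_on :: "'a::real_vector set \<Rightarrow> ('a \<Rightarrow> real) \<Rightarrow> bool" where
  "linear_on M \<pi> \<longleftrightarrow>
     (\<forall>x\<in>M. \<forall>y\<in>M. \<pi> (x + y) = \<pi> x + \<pi> y) \<and> (\<forall>x\<in>M. \<forall>c. \<pi> (c *\<^sub>R x) = c * \<pi> x)"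

definition kernel_on :: "'a::real_vector set \<Rightarrow> ('a \<Rightarrow> real) \<Rightarrow> 'a set" where
  "kernel_on M \<pi> = {Z \<in> M. \<pi> Z = 0}"

definition cost_set :: "'a::real_vector set \<Rightarrow> ('a \<Rightarrow> real) \<Rightarrow> 'a set \<Rightarrow> 'a \<Rightarrow> real set" where
  "cost_set M \<pi> A X = {\<pi> Z | Z. Z \<in> M \<and> X + Z \<in> A}"

definition rho :: "'a::real_vector set \<Rightarrow> ('a \<Rightarrow> real) \<Rightarrow> 'a set \<Rightarrow> 'a \<Rightarrow> real" where
  "rho M \<pi> A X = Inf (cost_set M \<pi> A X)"

text \<open>Finitely valued: the infimum is over a nonempty set bounded below.\<close>
definition rho_finite :: "'a::real_vector set \<Rightarrow> ('a \<Rightarrow> real) \<Rightarrow> 'a set \<Rightarrow> bool" where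
  "rho_finite M \<pi> A \<longleftrightarrow> (\<forall>X. cost_set M \<pi> A X \<noteq> {} \<and> bdd_below (cost_set M \<pi> A X))"

definition optimal_payoffs :: "'a::real_vector set \<Rightarrow> ('a \<Rightarrow> real) \<Rightarrow> 'a set \<Rightarrow> 'a \<Rightarrow> 'a set" where
  "optimal_payoffs M \<pi> A X = {Z \<in> M. X + Z \<in> A \<and> \<pi> Z = rho M \<pi> A X}"

end

theory Submission
  imports Defs
begin

theorem mainTheorem7:
  fixes ge :: "'a::{real_vector, t2_space, first_countable_topology} \<Rightarrow> 'a \<Rightarrow> bool"
    and M :: "'a set" and \<pi> :: "'a \<Rightarrow> real" and A :: "'a set"
  assumes tvs: "tvs_ops_continuous TYPE('a)"
    and lc: "locally_convex TYPE('a)"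
    and ord: "vector_order ge"
    and M_sub: "subspace M"
    and M_fin: "\<exists>B. finite B \<and> span B = M"
    and M_dim: "1 < dim M"
    and \<pi>_lin: "linear_on M \<pi>"
    and A1: "\<exists>U\<in>M. U \<in> pos_cone ge \<and> \<pi> U = 1"
    and A2_closed: "closed A" and A2_zero: "0 \<in> A" and A2_proper: "A \<noteq> UNIV"
    and A2_mono: "\<forall>a\<in>A. \<forall>p\<in>pos_cone ge. a + p \<in> A"
    and A3_fin: "rho_finite M \<pi> A"
    and A3_cont: "continuous_on UNIV (rho M \<pi> A)"
  shows "((\<forall>X. optimal_payoffs M \<pi> A X \<noteq> {}) \<longleftrightarrow>
           (\<forall>X\<in>frontier {a + z | a z. a \<in> A \<and> z \<in> kernel_on M \<pi>}. optimal_payoffs M \<pi> A X \<noteq> {}))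
       \<and> ((\<forall>X\<in>frontier {a + z | a z. a \<in> A \<and> z \<in> kernel_on M \<pi>}. optimal_payoffs M \<pi> A X \<noteq> {}) \<longleftrightarrow>
           closed {a + z | a z. a \<in> A \<and> z \<in> kernel_on M \<pi>})"
proof -
  obtain U where U: "U \<in> M" "ge U 0" "\<pi> U = 1" using A1 by (auto simp: pos_cone_def)
  define K where "K = kernel_on M \<pi>"
  define S where "S = {a + z | a z. a \<in> A \<and> z \<in> K}"
  have Sd: "{a + z | a z. a \<in> A \<and> z \<in> kernel_on M \<pi>} = S" by (simp add: S_def K_def)
  have piadd: "\<And>x y. x \<in> M \<Longrightarrow> y \<in> M \<Longrightarrow> \<pi> (x + y) = \<pi> x + \<pi> y"
    and piscale: "\<And>x c. x \<in> M \<Longrightarrow> \<pi> (c *\<^sub>R x) = c * \<pi> x"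
    using \<pi>_lin by (auto simp: linear_on_def)
  have pisub: "\<pi> (x - y) = \<pi> x - \<pi> y" if "x \<in> M" "y \<in> M" for x y
  proof -
    have "- y \<in> M" using M_sub that by (simp add: subspace_neg)
    moreover have "\<pi> (- y) = - \<pi> y" using piscale[OF that(2), of "-1"] by simp
    ultimately show ?thesis using piadd[OF that(1), of "- y"] by simp
  qed
  have cs: "c \<in> cost_set M \<pi> A X \<longleftrightarrow> X + c *\<^sub>R U \<in> S" for X c
  proof
    assume "c \<in> cost_set M \<pi> A X"
    then obtain Z where Z: "c = \<pi> Z" "Z \<in> M" "X + Z \<in> A" by (auto simp: cost_set_def)
    have cU: "c *\<^sub>R U \<in> M" using M_sub U by (simp add: subspace_scale)
    define k where "k = c *\<^sub>R U - Z"
    have "k \<in> M" using M_sub cU Z by (simp add: k_def subspace_diff)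
    moreover have "\<pi> k = 0" using pisub[OF cU Z(2)] piscale[OF U(1)] U Z by (simp add: k_def)
    ultimately have "k \<in> K" by (simp add: K_def kernel_on_def)
    moreover have "X + c *\<^sub>R U = (X + Z) + k" by (simp add: k_def)
    ultimately show "X + c *\<^sub>R U \<in> S" using Z unfolding S_def by blast
  next
    assume "X + c *\<^sub>R U \<in> S"
    then obtain a k where ak: "a \<in> A" "k \<in> K" "X + c *\<^sub>R U = a + k" unfolding S_def by blast
    have k: "k \<in> M" "\<pi> k = 0" using ak by (auto simp: K_def kernel_on_def)
    have cU: "c *\<^sub>R U \<in> M" using M_sub U by (simp add: subspace_scale)
    define Z where "Z = c *\<^sub>R U - k"
    have "Z \<in> M" using M_sub cU k by (simp add: Z_def subspace_diff)
    moreover have "\<pi> Z = c" using pisub[OF cU k(1)] piscale[OF U(1)] U k by (simp add: Z_def)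
    moreover have "X + Z = a" using ak(3) by (simp add: Z_def algebra_simps)
    ultimately show "c \<in> cost_set M \<pi> A X" using ak(1) unfolding cost_set_def by force
  qed
  have up: "Y + t *\<^sub>R U \<in> S" if "Y \<in> S" "0 \<le> t" for Y t
  proof -
    obtain a k where ak: "a \<in> A" "k \<in> K" "Y = a + k" using \<open>Y \<in> S\<close> unfolding S_def by blast
    have "ge (t *\<^sub>R U) (t *\<^sub>R 0)" using ord U that unfolding vector_order_def by blast
    hence "t *\<^sub>R U \<in> pos_cone ge" by (simp add: pos_cone_def)
    hence "a + t *\<^sub>R U \<in> A" using A2_mono ak by blast
    moreover have "Y + t *\<^sub>R U = (a + t *\<^sub>R U) + k" using ak by simp
    ultimately show ?thesis using ak unfolding S_def by blast
  qed
  have opt: "optimal_payoffs M \<pi> A X \<noteq> {} \<longleftrightarrow> rho M \<pi> A X \<in> cost_set M \<pi> A X" for X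
    unfolding optimal_payoffs_def cost_set_def by (auto, metis)
  have ne: "cost_set M \<pi> A X \<noteq> {}" and bdd: "bdd_below (cost_set M \<pi> A X)" for X
    using A3_fin by (auto simp: rho_finite_def)
  have ca: "\<forall>X. optimal_payoffs M \<pi> A X \<noteq> {}" if cl: "closed S"
  proof
    fix X
    have cont: "continuous_on UNIV (\<lambda>t::real. X + t *\<^sub>R U)"
    proof -
      have sc: "continuous_on (UNIV :: (real \<times> 'a) set) (\<lambda>p. fst p *\<^sub>R snd p)"
        and ad: "continuous_on (UNIV :: ('a \<times> 'a) set) (\<lambda>p. fst p + snd p)"
        using tvs by (auto simp: tvs_ops_continuous_def)
      have c1: "continuous_on UNIV (\<lambda>t::real. (t, U))" by (intro continuous_on_Pair continuous_on_id continuous_on_const)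
      have c2: "continuous_on UNIV (\<lambda>t::real. fst (t, U) *\<^sub>R snd (t, U))"
        apply (rule continuous_on_compose2[OF sc c1]) by simp
      have c3: "continuous_on UNIV (\<lambda>t::real. (X, t *\<^sub>R U))"
        using continuous_on_Pair[OF continuous_on_const c2] by simp
      have "continuous_on UNIV (\<lambda>t::real. fst (X, t *\<^sub>R U) + snd (X, t *\<^sub>R U))"
        apply (rule continuous_on_compose2[OF ad c3]) by simp
      thus ?thesis by simp
    qed
    have "cost_set M \<pi> A X = (\<lambda>t::real. X + t *\<^sub>R U) -` S" using cs by auto
    hence "closed (cost_set M \<pi> A X)" using closed_vimage[OF cl cont] by simp
    hence "rho M \<pi> A X \<in> cost_set M \<pi> A X"
      unfolding rho_def by (rule closed_contains_Inf[OF ne bdd])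
    thus "optimal_payoffs M \<pi> A X \<noteq> {}" using opt by blast
  qed
  have bc: "closed S" if b: "\<forall>X\<in>frontier S. optimal_payoffs M \<pi> A X \<noteq> {}"
  proof -
    have "closed (rho M \<pi> A -` {..0})" using closed_vimage[OF _ A3_cont] by simp
    moreover have "S \<subseteq> rho M \<pi> A -` {..0}"
    proof
      fix Y assume "Y \<in> S"
      hence z0: "0 \<in> cost_set M \<pi> A Y" using cs[of 0 Y] by simp
      hence "rho M \<pi> A Y \<le> 0" unfolding rho_def by (rule cInf_lower[OF _ bdd])
      thus "Y \<in> rho M \<pi> A -` {..0}" by simp
    qed
    ultimately have clS: "closure S \<subseteq> rho M \<pi> A -` {..0}" by (simp add: closure_minimal)
    have "closure S \<subseteq> S"
    proof
      fix X assume X: "X \<in> closure S"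
      show "X \<in> S"
      proof (rule ccontr)
        assume "X \<notin> S"
        hence "X \<in> frontier S" using X interior_subset unfolding frontier_def by blast
        hence "rho M \<pi> A X \<in> cost_set M \<pi> A X" using b opt by blast
        hence "X + rho M \<pi> A X *\<^sub>R U \<in> S" using cs by blast
        moreover have "rho M \<pi> A X \<le> 0" using clS X by auto
        ultimately have "X + rho M \<pi> A X *\<^sub>R U + (- rho M \<pi> A X) *\<^sub>R U \<in> S"
          using up[of "X + rho M \<pi> A X *\<^sub>R U" "- rho M \<pi> A X"] by linarith
        moreover have "X + rho M \<pi> A X *\<^sub>R U + (- rho M \<pi> A X) *\<^sub>R U = X"
          by (simp add: scaleR_left.minus)
        ultimately have "X \<in> S" by simp
        thus False using \<open>X \<notin> S\<close> by blast
      qed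
    qed
    thus ?thesis using closure_subset_eq by blast
  qed
  show ?thesis unfolding Sd using ca bc by blast
qed

end
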